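(* Consider a firm $i$ in period $t$ whose planned (expected) output is $$Y^e_{it}=F\big(K_{it},\exp\{\varphi_{it}\}L_{it},M_{it}\big)\exp\{\omega_{it}\},$$ and whose realized output is $Y_{it}=Y^e_{it}\exp\{\eta_{it}\}$, where $K_{it}$ is physical capital, $L_{it}$ labor, $M_{it}$ materials, $\omega_{it}$ Hicks-neutral (factor-neutral) productivity, $\varphi_{it}$ Harrod-neutral (labor-augmenting) productivity, and $\eta_{it}$ a transitory shock. Assume: (A1) $K_{it}$ is a dynamic input chosen at time $t-1$ (so it is predetermined at $t$, with $K_{it}=I_{it-1}+(1-\delta)K_{it-1}$), while $L_{it}$ and $M_{it}$ are freely varying inputs chosen statically at time $t$ with no dynamic implications; (A2) $F$ is continuous, differentiable, positively monotone and concave in its inputs, and strongly separable as $F(K,\exp\{\varphi\}L,M)=G\big(K,H(\exp\{\varphi\}L,M)\big)$ with $H$ homogeneous of some degree, and $F$ has a known parametric form; (A3) $\omega_{it}$ and $\varphi_{it}$ follow controlled first-order Markov processes, $\mathcal{P}_\omega(\omega_{it}\mid\Xi_{it-1})=\mathcal{P}_\omega(\omega_{it}\mid\omega_{it-1},X_{it-1})$ and $\mathcal{P}_\varphi(\varphi_{it}\mid\Xi_{it-1})=\mathcal{P}_\varphi(\varphi_{it}\mid\varphi_{it-1},Z_{it-1})$, where $\Xi_{it}$ is the firm's time-$t$ information set and $X_{it},Z_{it}$ are productivity-modifying activities, and $\eta_{it}$ is i.i.d. with $\mathcal{P}_\eta(\eta_{it}\mid\Xi_{it})=\mathcal{P}_\eta(\eta_{it})$;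 (A5) risk-neutral firms face perfectly competitive factor markets with firm-common prices $P^L_t,P^M_t$, and a monopolistically competitive output market with downward-sloping inverse residual demand $P^Y_{it}=D(Y^e_{it},U_{it})$, where $U_{it}\in\Xi_{it}$ is a vector of demand shifters known to the firm. The firm chooses $(L_{it},M_{it})$ to maximize expected static profit $\theta\, D(Y^e_{it},U_{it})\,Y^e_{it}-P^L_tL_{it}-P^M_tM_{it}$ with $\theta=\mathbb{E}[\exp\{\eta_{it}\}\mid\Xi_{it}]$, so that the first-order conditions are $P^Y_{it}\,\theta\,\mu_{it}^{-1}\,\partial Y^e_{it}/\partial M_{it}=P^M_t$ and $P^Y_{it}\,\theta\,\mu_{it}^{-1}\,\partial Y^e_{it}/\partial L_{it}=P^L_t$, where $\mu_{it}=\mu(P^Y_{it},U_{it})=\big(1+1/\delta(P^Y_{it},U_{it})\big)^{-1}$ is the markup and $\delta(P^Y_{it},U_{it})<-1$ is the price elasticity of demand. Suppose in addition that (i) $\partial^2\ln F/(\partial\ln L\,\partial\ln M)\ge 0$, and (ii) $0\le \partial\ln\mu/\partial\ln P^Y\le 1$. Then the firm's conditional material demand $M_{it}=\mathcal{M}(K_{it},P^L_t,P^M_t,U_{it},\varphi_{it},\omega_{it})$ is weakly increasing in $\omega_{it}$ and in $\varphi_{it}$, conditional on $(K_{it},P^L_t,P^M_t,U_{it})$.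
   Context: Firms are indexed by $i$ and time by $t$. $\omega_{it}$ enters output log-additively (Hicks-neutral productivity) and $\varphi_{it}$ multiplies labor inside $F$ (labor-augmenting, Harrod-neutral productivity). The "conditional material demand" is the optimal $M_{it}$ solving the static profit maximization above given the state $(K_{it},P^L_t,P^M_t,U_{it},\varphi_{it},\omega_{it})$. *)

theory Defs
  imports "HOL-Analysis.Analysis"
begin

text \<open>Positive orthant of input space (K, effective labor exp(phi)*L, M).\<close>
definition PosOrth :: "(real \<times> real \<times> real) set" where
  "PosOrth = {(k, x, m). 0 < k \<and> 0 < x \<and> 0 < m}"

definition expected_output ::
  "(real \<Rightarrow> real \<Rightarrow> real \<Rightarrow> real) \<Rightarrow> real \<Rightarrow> real \<Rightarrow> real \<Rightarrow> real \<Rightarrow> real \<Rightarrow> real" where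
  "expected_output F K phi omega L M = F K (exp phi * L) M * exp omega"

definition static_profit ::
  "(real \<Rightarrow> real \<Rightarrow> real \<Rightarrow> real) \<Rightarrow> (real \<Rightarrow> 'u \<Rightarrow> real) \<Rightarrow> real \<Rightarrow>
   real \<Rightarrow> real \<Rightarrow> real \<Rightarrow> 'u \<Rightarrow> real \<Rightarrow> real \<Rightarrow> real \<Rightarrow> real \<Rightarrow> real" where
  "static_profit F D theta K PL PM U phi omega L M =
     (let Y = expected_output F K phi omega L M in theta * D Y U * Y - PL * L - PM * M)"

definition static_optimum ::
  "(real \<Rightarrow> real \<Rightarrow> real \<Rightarrow> real) \<Rightarrow> (real \<Rightarrow> 'u \<Rightarrow> real) \<Rightarrow> real \<Rightarrow>
   real \<Rightarrow> real \<Rightarrow> real \<Rightarrow> 'u \<Rightarrow> real \<Rightarrow> real \<Rightarrow> real \<Rightarrow> real \<Rightarrow> bool" where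
  "static_optimum F D theta K PL PM U phi omega L M \<longleftrightarrow>
     0 < L \<and> 0 < M \<and>
     (\<forall>L' M'. 0 < L' \<and> 0 < M' \<longrightarrow>
        static_profit F D theta K PL PM U phi omega L' M' \<le> static_profit F D theta K PL PM U phi omega L M)"

definition markup :: "(real \<Rightarrow> 'u \<Rightarrow> real) \<Rightarrow> real \<Rightarrow> 'u \<Rightarrow> real" where
  "markup del P U = inverse (1 + inverse (del P U))"

definition homogeneous_pos :: "(real \<Rightarrow> real \<Rightarrow> real) \<Rightarrow> real \<Rightarrow> bool" where
  "homogeneous_pos H r \<longleftrightarrow>
     (\<forall>t X M. 0 < t \<and> 0 < X \<and> 0 < M \<longrightarrow> H (t * X) (t * M) = t powr r * H X M)"

definition logF :: "(real \<Rightarrow> real \<Rightarrow> real \<Rightarrow> real) \<Rightarrow> real \<Rightarrow> real \<Rightarrow> real \<Rightarrow> real" where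
  "logF F K l m = ln (F K (exp l) (exp m))"

end

theory Submission
  imports Defs
begin


lemma mono_from_deriv:
  fixes g g' :: "real \<Rightarrow> real"
  assumes "\<And>x. (g has_real_derivative g' x) (at x)" "\<And>x. 0 \<le> g' x" "a \<le> b"
  shows "g a \<le> g b"
  using DERIV_nonneg_imp_nondecreasing[OF assms(3)] assms(1,2) by blast

lemma incdiff_from_deriv:
  fixes g g' :: "real \<Rightarrow> real"
  assumes der: "\<And>x. (g has_real_derivative g' x) (at x)" and mono: "\<And>x y. x \<le> y \<Longrightarrow> g' x \<le> g' y"
    and "0 \<le> d" "a \<le> b"
  shows "g (a + d) - g a \<le> g (b + d) - g b"
proof -
  have "\<And>x. ((\<lambda>x. g (x + d) - g x) has_real_derivative g' (x + d) - g' x) (at x)"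
  proof -
    fix x
    have "((\<lambda>x. g (x + d)) has_real_derivative g' (x + d)) (at x)"
      using der[of "x + d"] DERIV_shift by blast
    then show "?thesis x" using der[of x] by (intro derivative_intros) auto
  qed
  moreover have "\<And>x. 0 \<le> g' (x + d) - g' x" using mono \<open>0 \<le> d\<close> by fastforce
  ultimately show ?thesis using mono_from_deriv[of "\<lambda>x. g (x + d) - g x" "\<lambda>x. g' (x + d) - g' x", OF _ _ \<open>a \<le> b\<close>] by blast
qed

lemma combine:
  fixes R :: "real \<Rightarrow> real" and f :: "real \<Rightarrow> real \<Rightarrow> real"
  assumes monoR: "\<And>a b. a \<le> b \<Longrightarrow> R a \<le> R b"
    and idR: "\<And>a b d. a \<le> b \<Longrightarrow> 0 \<le> d \<Longrightarrow> R (a + d) - R a \<le> R (b + d) - R b"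
    and fl: "\<And>l l' m. l \<le> l' \<Longrightarrow> f l m \<le> f l' m"
    and fm: "\<And>l m m'. m' \<le> m \<Longrightarrow> f l m' \<le> f l m"
    and sm: "\<And>l l' m m'. l \<le> l' \<Longrightarrow> m' \<le> m \<Longrightarrow> f l m - f l m' \<le> f l' m - f l' m'"
    and w: "w \<le> w'" and m: "m' \<le> m"
  shows "R (w' + f l' m') + R (w + f l m) \<le> R (w' + f (max l l') m) + R (w + f (min l l') m')"
proof (cases "l' \<le> l")
  case True
  have "R ((w + f l' m') + (w' - w)) - R (w + f l' m') \<le> R ((w + f l m) + (w' - w)) - R (w + f l m)"
    using idR fl fm True m w by (meson add_left_mono order_trans diff_ge_0_iff_ge)
  moreover have e: "(w + f l' m') + (w' - w) = w' + f l' m'" "(w + f l m) + (w' - w) = w' + f l m" by auto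
  ultimately have h: "R (w' + f l' m') - R (w + f l' m') \<le> R (w' + f l m) - R (w + f l m)" by (simp only: e)
  have mm: "max l l' = l" "min l l' = l'" using True by auto
  show ?thesis unfolding mm using h by linarith
next
  case False
  define A where "A = w + f l m'"
  define B where "B = w' + f l' m'"
  define d1 where "d1 = f l m - f l m'"
  define d2 where "d2 = f l' m - f l' m'"
  have AB: "A \<le> B" unfolding A_def B_def using fl[of l l' m'] False w by simp
  have d: "0 \<le> d1" "d1 \<le> d2" unfolding d1_def d2_def using fm[OF m] sm[of l l' m' m] False m by auto
  have "R (A + d1) - R A \<le> R (B + d1) - R B" using idR AB d by blast
  moreover have "R (B + d1) \<le> R (B + d2)" using monoR d by simp
  ultimately have "R B + R (A + d1) \<le> R (B + d2) + R A" by linarith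
  moreover have "A + d1 = w + f l m" "B + d2 = w' + f l' m" unfolding A_def B_def d1_def d2_def by auto
  ultimately show ?thesis using False unfolding A_def B_def by (simp add: max_def min_def)
qed



lemma f_facts:
  fixes F :: "real \<Rightarrow> real \<Rightarrow> real \<Rightarrow> real" and K :: real
  assumes F_pos: "\<forall>(k, x, m) \<in> PosOrth. 0 < F k x m"
    and F_mono: "\<forall>k k' x x' m m'. 0 < k \<and> 0 < x \<and> 0 < m \<and> 0 < k' \<and> 0 < x' \<and> 0 < m' \<longrightarrow>
                    (k < k' \<longrightarrow> F k x m < F k' x m) \<and>
                    (x < x' \<longrightarrow> F k x m < F k x' m) \<and>
                    (m < m' \<longrightarrow> F k x m < F k x m')"
    and cond_i: "\<forall>K l m. 0 < K \<longrightarrow>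
                  (\<lambda>l'. logF F K l' m) differentiable (at l) \<and>
                  (\<lambda>m'. deriv (\<lambda>l'. logF F K l' m') l) differentiable (at m) \<and>
                  0 \<le> deriv (\<lambda>m'. deriv (\<lambda>l'. logF F K l' m') l) m"
    and K: "0 < K"
  shows "\<And>l l' m. l \<le> l' \<Longrightarrow> logF F K l m \<le> logF F K l' m"
    and "\<And>l m m'. m' \<le> m \<Longrightarrow> logF F K l m' \<le> logF F K l m"
    and "\<And>l l' m m'. l \<le> l' \<Longrightarrow> m' \<le> m \<Longrightarrow> logF F K l m - logF F K l m' \<le> logF F K l' m - logF F K l' m'"
proof -
  have pos: "\<And>x m. 0 < x \<Longrightarrow> 0 < m \<Longrightarrow> 0 < F K x m" using F_pos K unfolding PosOrth_def by auto
  show "logF F K l m \<le> logF F K l' m" if "l \<le> l'" for l l' m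
  proof (cases "l = l'")
    case False
    then have "exp l < exp l'" using that by simp
    then have "F K (exp l) (exp m) < F K (exp l') (exp m)" using F_mono K by force
    then show ?thesis unfolding logF_def using pos by (simp add: less_imp_le)
  qed simp
  show "logF F K l m' \<le> logF F K l m" if "m' \<le> m" for l m m'
  proof (cases "m = m'")
    case False
    then have "exp m' < exp m" using that by simp
    then have "F K (exp l) (exp m') < F K (exp l) (exp m)" using F_mono K by force
    then show ?thesis unfolding logF_def using pos by (simp add: less_imp_le)
  qed simp
  show "logF F K l m - logF F K l m' \<le> logF F K l' m - logF F K l' m'" if "l \<le> l'" "m' \<le> m" for l l' m m'
  proof -
    define G where "G x y = deriv (\<lambda>l'. logF F K l' y) x" for x y
    have Gm: "G x m' \<le> G x m" for x
    proof -
      have "\<And>y. ((\<lambda>y. G x y) has_real_derivative deriv (\<lambda>y. G x y) y) (at y)"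
        using cond_i K unfolding G_def by (simp add: DERIV_deriv_iff_real_differentiable)
      moreover have "\<And>y. 0 \<le> deriv (\<lambda>y. G x y) y" using cond_i K unfolding G_def by simp
      ultimately show ?thesis using mono_from_deriv[OF _ _ \<open>m' \<le> m\<close>] by blast
    qed
    have "\<And>x. ((\<lambda>x. logF F K x m - logF F K x m') has_real_derivative G x m - G x m') (at x)"
    proof -
      fix x
      have "((\<lambda>x. logF F K x y) has_real_derivative G x y) (at x)" for y
        using cond_i K unfolding G_def by (simp add: DERIV_deriv_iff_real_differentiable)
      then show "?thesis x" by (intro derivative_intros) auto
    qed
    moreover have "\<And>x. 0 \<le> G x m - G x m'" using Gm by simp
    ultimately show ?thesis using mono_from_deriv[OF _ _ \<open>l \<le> l'\<close>, of "\<lambda>x. logF F K x m - logF F K x m'" "\<lambda>x. G x m - G x m'"] by blast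
  qed
qed



lemma R_facts:
  fixes D del :: "real \<Rightarrow> 'u \<Rightarrow> real" and U :: 'u
  assumes demand: "\<forall>Y U. 0 < Y \<longrightarrow> 0 < D Y U \<and>
                  (\<exists>D'. ((\<lambda>y. D y U) has_real_derivative D') (at Y) \<and>
                        del (D Y U) U = D Y U / (Y * D'))"
    and elastic: "\<forall>P U. 0 < P \<longrightarrow> del P U < -1"
    and cond_ii: "\<forall>P U. 0 < P \<longrightarrow>
                  (\<lambda>p. ln (markup del (exp p) U)) differentiable (at (ln P)) \<and>
                  0 \<le> deriv (\<lambda>p. ln (markup del (exp p) U)) (ln P) \<and>
                  deriv (\<lambda>p. ln (markup del (exp p) U)) (ln P) \<le> 1"
  shows "\<And>a b. a \<le> b \<Longrightarrow> D (exp a) U * exp a \<le> D (exp b) U * exp b"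
    and "\<And>a b d. a \<le> b \<Longrightarrow> 0 \<le> d \<Longrightarrow>
          D (exp (a + d)) U * exp (a + d) - D (exp a) U * exp a \<le> D (exp (b + d)) U * exp (b + d) - D (exp b) U * exp b"
proof -
  define R where "R y = D (exp y) U * exp y" for y
  define Dp where "Dp Y = (SOME D'. ((\<lambda>y. D y U) has_real_derivative D') (at Y) \<and>
                        del (D Y U) U = D Y U / (Y * D'))" for Y
  have Dpos: "0 < D Y U" if "0 < Y" for Y using demand that by blast
  have Dp: "((\<lambda>y. D y U) has_real_derivative Dp Y) (at Y) \<and> del (D Y U) U = D Y U / (Y * Dp Y)" if "0 < Y" for Y
    unfolding Dp_def by (rule someI_ex) (use demand that in blast)
  have Dpneg: "Dp Y < 0" if "0 < Y" for Y
  proof (rule ccontr)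
    assume "\<not> Dp Y < 0"
    then have "0 \<le> D Y U / (Y * Dp Y)" using Dpos[OF that] that by simp
    moreover have "del (D Y U) U < -1" using elastic Dpos[OF that] by blast
    ultimately show False using Dp[OF that] by simp
  qed
  have Dmono: "D Y2 U \<le> D Y1 U" if "0 < Y1" "Y1 \<le> Y2" for Y1 Y2
    using DERIV_nonpos_imp_nonincreasing[OF that(2), of "\<lambda>y. D y U"] Dp Dpneg that
    by (meson less_imp_le less_le_trans)
  have mupos: "0 < markup del P U" if "0 < P" for P
  proof -
    have e: "del P U < -1" using elastic that by blast
    then have "inverse (del P U) > -1" by (smt (verit, best) inverse_less_iff_less_neg inverse_minus_eq inverse_1)
    moreover have "inverse (del P U) < 0" using e by simp
    ultimately show ?thesis unfolding markup_def by simp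
  qed
  have mumono: "markup del P1 U \<le> markup del P2 U" if "0 < P1" "P1 \<le> P2" for P1 P2
  proof -
    define g where "g p = ln (markup del (exp p) U)" for p
    have "\<And>p. (g has_real_derivative deriv g p) (at p)"
      using cond_ii unfolding g_def by (metis DERIV_deriv_iff_real_differentiable exp_gt_zero ln_exp)
    moreover have "\<And>p. 0 \<le> deriv g p"
      using cond_ii unfolding g_def by (metis exp_gt_zero ln_exp)
    moreover have "ln P1 \<le> ln P2" using that by simp
    ultimately have "g (ln P1) \<le> g (ln P2)" using mono_from_deriv by blast
    then have "ln (markup del P1 U) \<le> ln (markup del P2 U)" unfolding g_def using that by simp
    then show ?thesis using mupos that by simp
  qed
  define q where "q y = 1 + inverse (del (D (exp y) U) U)" for y
  have q_eq: "q y = inverse (markup del (D (exp y) U) U)" for y unfolding q_def markup_def by simp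
  have qpos: "0 < q y" for y unfolding q_eq using mupos Dpos by simp
  have qmono: "q y1 \<le> q y2" if "y1 \<le> y2" for y1 y2
  proof -
    have "D (exp y2) U \<le> D (exp y1) U" using Dmono that by simp
    then have "markup del (D (exp y2) U) U \<le> markup del (D (exp y1) U) U" using mumono Dpos by simp
    then show ?thesis unfolding q_eq using mupos Dpos by (simp add: le_imp_inverse_le)
  qed
  have Rpos: "0 < R y" for y unfolding R_def using Dpos by simp
  have Rder: "(R has_real_derivative R y * q y) (at y)" for y
  proof -
    have "((\<lambda>y. D (exp y) U) has_real_derivative Dp (exp y) * exp y) (at y)"
      using Dp[of "exp y"] by (intro DERIV_chain2[where f="\<lambda>y. D y U"]) (auto intro: DERIV_exp)
    then have d: "(R has_real_derivative Dp (exp y) * exp y * exp y + exp y * D (exp y) U) (at y)"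
      unfolding R_def by (intro derivative_eq_intros) auto
    have dl: "del (D (exp y) U) U = D (exp y) U / (exp y * Dp (exp y))" using Dp[of "exp y"] by simp
    have "Dp (exp y) * exp y * exp y + exp y * D (exp y) U = R y * q y"
      using Dpneg[of "exp y"] Dpos[of "exp y"]
      unfolding R_def q_def dl by (simp add: field_simps)
    then show ?thesis using d by simp
  qed
  have R'mono: "R x * q x \<le> R y * q y" if "x \<le> y" for x y
  proof -
    have "R x \<le> R y" using mono_from_deriv[of R "\<lambda>y. R y * q y", OF Rder] Rpos qpos that
      by (simp add: less_imp_le)
    then show ?thesis using qmono[OF that] Rpos qpos by (simp add: mult_mono less_imp_le)
  qed
  show "D (exp a) U * exp a \<le> D (exp b) U * exp b" if "a \<le> b" for a b
    using mono_from_deriv[of R "\<lambda>y. R y * q y", OF Rder] Rpos qpos that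
    unfolding R_def by (simp add: less_imp_le)
  show "D (exp (a + d)) U * exp (a + d) - D (exp a) U * exp a \<le> D (exp (b + d)) U * exp (b + d) - D (exp b) U * exp b"
    if "a \<le> b" "0 \<le> d" for a b d
    using incdiff_from_deriv[OF Rder R'mono that(2,1)] unfolding R_def by simp
qed



lemma cost_ineq:
  fixes L L' phi phi' :: real
  assumes "0 < L" "0 < L'" "phi \<le> phi'"
  shows "exp (max (phi + ln L) (phi' + ln L') - phi') + exp (min (phi + ln L) (phi' + ln L') - phi) \<le> L + L'"
proof (cases "phi' + ln L' \<le> phi + ln L")
  case True
  define E where "E = exp (phi' - phi)"
  have E1: "1 \<le> E" unfolding E_def using assms by simp
  have e1: "exp (phi + ln L - phi') = L / E" unfolding E_def using assms by (simp add: exp_diff exp_add)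
  have e2: "exp (phi' + ln L' - phi) = L' * E" unfolding E_def using assms by (simp add: exp_diff exp_add)
  have "exp (phi' + ln L') \<le> exp (phi + ln L)" using True by simp
  then have "exp phi' * L' \<le> exp phi * L" using assms by (simp add: exp_add)
  then have LE: "L' * E \<le> L" unfolding E_def using assms by (simp add: exp_diff field_simps)
  have "0 \<le> (E - 1) * (L - L' * E)" using E1 LE by simp
  then have "L + L' * E * E \<le> L * E + L' * E" by (simp add: algebra_simps)
  then have "L / E + L' * E \<le> L + L'" using E1 by (simp add: field_simps)
  then show ?thesis using True e1 e2 by (simp add: max_def min_def)
next
  case False
  then show ?thesis using assms by (simp add: max_def min_def)
qed

theorem proposition1:
  fixes F :: "real \<Rightarrow> real \<Rightarrow> real \<Rightarrow> real"
    and D :: "real \<Rightarrow> 'u \<Rightarrow> real"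
    and del :: "real \<Rightarrow> 'u \<Rightarrow> real"
    and theta :: real
    and Ldem Mdem :: "real \<Rightarrow> real \<Rightarrow> real \<Rightarrow> 'u \<Rightarrow> real \<Rightarrow> real \<Rightarrow> real"
  assumes F_pos: "\<forall>(k, x, m) \<in> PosOrth. 0 < F k x m"
    and F_cont: "continuous_on PosOrth (\<lambda>(k, x, m). F k x m)"
    and F_diff: "\<forall>p \<in> PosOrth. (\<lambda>(k, x, m). F k x m) differentiable (at p)"
    and F_mono: "\<forall>k k' x x' m m'. 0 < k \<and> 0 < x \<and> 0 < m \<and> 0 < k' \<and> 0 < x' \<and> 0 < m' \<longrightarrow>
                    (k < k' \<longrightarrow> F k x m < F k' x m) \<and>
                    (x < x' \<longrightarrow> F k x m < F k x' m) \<and>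
                    (m < m' \<longrightarrow> F k x m < F k x m')"
    and F_concave: "concave_on PosOrth (\<lambda>(k, x, m). F k x m)"
    and F_sep: "\<exists>G H r. homogeneous_pos H r \<and>
                  (\<forall>k x m. 0 < k \<and> 0 < x \<and> 0 < m \<longrightarrow> F k x m = G k (H x m))"
    and demand: "\<forall>Y U. 0 < Y \<longrightarrow> 0 < D Y U \<and>
                  (\<exists>D'. ((\<lambda>y. D y U) has_real_derivative D') (at Y) \<and>
                        del (D Y U) U = D Y U / (Y * D'))"
    and elastic: "\<forall>P U. 0 < P \<longrightarrow> del P U < -1"
    and theta_pos: "0 < theta"
    and cond_i: "\<forall>K l m. 0 < K \<longrightarrow>
                  (\<lambda>l'. logF F K l' m) differentiable (at l) \<and>
                  (\<lambda>m'. deriv (\<lambda>l'. logF F K l' m') l) differentiable (at m) \<and>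
                  0 \<le> deriv (\<lambda>m'. deriv (\<lambda>l'. logF F K l' m') l) m"
    and cond_ii: "\<forall>P U. 0 < P \<longrightarrow>
                  (\<lambda>p. ln (markup del (exp p) U)) differentiable (at (ln P)) \<and>
                  0 \<le> deriv (\<lambda>p. ln (markup del (exp p) U)) (ln P) \<and>
                  deriv (\<lambda>p. ln (markup del (exp p) U)) (ln P) \<le> 1"
    and demand_opt: "\<forall>K PL PM U phi omega. 0 < K \<and> 0 < PL \<and> 0 < PM \<longrightarrow>
                  static_optimum F D theta K PL PM U phi omega
                    (Ldem K PL PM U phi omega) (Mdem K PL PM U phi omega)"
    and demand_unique: "\<forall>K PL PM U phi omega L M. 0 < K \<and> 0 < PL \<and> 0 < PM \<and>
                  static_optimum F D theta K PL PM U phi omega L M \<longrightarrow>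
                  L = Ldem K PL PM U phi omega \<and> M = Mdem K PL PM U phi omega"
  shows "(\<forall>K PL PM U phi omega omega'. 0 < K \<and> 0 < PL \<and> 0 < PM \<and> omega \<le> omega' \<longrightarrow>
            Mdem K PL PM U phi omega \<le> Mdem K PL PM U phi omega') \<and>
         (\<forall>K PL PM U phi phi' omega. 0 < K \<and> 0 < PL \<and> 0 < PM \<and> phi \<le> phi' \<longrightarrow>
            Mdem K PL PM U phi omega \<le> Mdem K PL PM U phi' omega)"
proof -
  have main: "Mdem K PL PM U phi omega \<le> Mdem K PL PM U phi' omega'"
    if KP: "0 < K" "0 < PL" "0 < PM" and ww: "omega \<le> omega'" and pp: "phi \<le> phi'"
    and one: "omega = omega' \<or> phi = phi'"
    for K PL PM U phi phi' omega omega'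
  proof (rule ccontr)
    assume "\<not> ?thesis"
    then have Mlt: "Mdem K PL PM U phi' omega' < Mdem K PL PM U phi omega" by simp
    define f where "f = logF F K"
    define R where "R y = D (exp y) U * exp y" for y
    define prof where "prof ph om L M = static_profit F D theta K PL PM U ph om L M" for ph om L M
    have Fpos: "\<And>x m. 0 < x \<Longrightarrow> 0 < m \<Longrightarrow> 0 < F K x m" using F_pos KP unfolding PosOrth_def by auto
    have prof_eq: "prof ph om L M = theta * R (om + f (ph + ln L) (ln M)) - PL * L - PM * M"
      if "0 < L" "0 < M" for ph om L M
    proof -
      have "F K (exp ph * L) M = exp (f (ph + ln L) (ln M))"
        unfolding f_def logF_def using that Fpos[of "exp ph * L" M] by (simp add: exp_add)
      then have "expected_output F K ph om L M = exp (om + f (ph + ln L) (ln M))"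
        unfolding expected_output_def by (simp add: exp_add)
      then show ?thesis unfolding prof_def static_profit_def R_def Let_def by simp
    qed
    have fl: "\<And>l l' m. l \<le> l' \<Longrightarrow> f l m \<le> f l' m"
     and fm: "\<And>l m m'. m' \<le> m \<Longrightarrow> f l m' \<le> f l m"
     and sm: "\<And>l l' m m'. l \<le> l' \<Longrightarrow> m' \<le> m \<Longrightarrow> f l m - f l m' \<le> f l' m - f l' m'"
      unfolding f_def using f_facts[OF F_pos F_mono cond_i KP(1)] by auto
    have Rm: "\<And>a b. a \<le> b \<Longrightarrow> R a \<le> R b"
     and Ri: "\<And>a b d. a \<le> b \<Longrightarrow> 0 \<le> d \<Longrightarrow> R (a + d) - R a \<le> R (b + d) - R b"
      unfolding R_def using R_facts[OF demand elastic cond_ii, where U=U] by auto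
    define L where "L = Ldem K PL PM U phi omega"
    define M where "M = Mdem K PL PM U phi omega"
    define L' where "L' = Ldem K PL PM U phi' omega'"
    define M' where "M' = Mdem K PL PM U phi' omega'"
    have opt: "static_optimum F D theta K PL PM U phi omega L M"
      "static_optimum F D theta K PL PM U phi' omega' L' M'"
      using demand_opt KP unfolding L_def M_def L'_def M'_def by auto
    then have pos: "0 < L" "0 < M" "0 < L'" "0 < M'" unfolding static_optimum_def by auto
    have mx: "\<And>L1 M1. 0 < L1 \<Longrightarrow> 0 < M1 \<Longrightarrow> prof phi omega L1 M1 \<le> prof phi omega L M"
      "\<And>L1 M1. 0 < L1 \<Longrightarrow> 0 < M1 \<Longrightarrow> prof phi' omega' L1 M1 \<le> prof phi' omega' L' M'"
      using opt unfolding static_optimum_def prof_def by auto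
    define a where "a = phi + ln L"
    define a' where "a' = phi' + ln L'"
    define L2 where "L2 = exp (max a a' - phi')"
    define L3 where "L3 = exp (min a a' - phi)"
    have L2: "phi' + ln L2 = max a a'" "0 < L2" unfolding L2_def by auto
    have L3: "phi + ln L3 = min a a'" "0 < L3" unfolding L3_def by auto
    have cst: "L2 + L3 \<le> L + L'" unfolding L2_def L3_def a_def a'_def using cost_ineq pos pp by blast
    have "R (omega' + f a' (ln M')) + R (omega + f a (ln M)) \<le> R (omega' + f (max a a') (ln M)) + R (omega + f (min a a') (ln M'))"
      using combine[OF Rm Ri fl fm sm ww, where m'="ln M'" and m="ln M" and l'=a' and l=a] Mlt pos unfolding M_def[symmetric] M'_def[symmetric] by auto
    then have h1: "theta * (R (omega' + f a' (ln M')) + R (omega + f a (ln M))) \<le> theta * (R (omega' + f (max a a') (ln M)) + R (omega + f (min a a') (ln M')))"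
      using theta_pos by simp
    have h2: "PL * L2 + PL * L3 \<le> PL * L + PL * L'" using cst KP by (simp add: distrib_left[symmetric])
    have sum: "prof phi' omega' L' M' + prof phi omega L M \<le> prof phi' omega' L2 M + prof phi omega L3 M'"
    proof -
      have "prof phi' omega' L' M' = theta * R (omega' + f a' (ln M')) - PL * L' - PM * M'"
        using prof_eq[of L' M'] pos unfolding a'_def by simp
      moreover have "prof phi omega L M = theta * R (omega + f a (ln M)) - PL * L - PM * M"
        using prof_eq[of L M] pos unfolding a_def by simp
      moreover have "prof phi' omega' L2 M = theta * R (omega' + f (max a a') (ln M)) - PL * L2 - PM * M"
        using prof_eq[of L2 M] pos L2 by simp
      moreover have "prof phi omega L3 M' = theta * R (omega + f (min a a') (ln M')) - PL * L3 - PM * M'"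
        using prof_eq[of L3 M'] pos L3 by simp
      ultimately show ?thesis using h1 h2 by (simp add: algebra_simps)
    qed
    have "prof phi omega L3 M' \<le> prof phi omega L M" using mx(1) L3 pos by simp
    then have "prof phi' omega' L' M' \<le> prof phi' omega' L2 M" using sum by linarith
    then have "static_optimum F D theta K PL PM U phi' omega' L2 M"
      unfolding static_optimum_def using mx(2) L2 pos unfolding prof_def by (meson order_trans)
    then have "M = M'" using demand_unique KP unfolding M'_def by blast
    then show False using Mlt unfolding M_def M'_def by simp
  qed
  show ?thesis using main by auto
qed

end
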